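(* For any $k,d$ and $\rho$, a Bayes-optimal strategy for $\mathrm{Sing}(k,q_{HC})$ is: the learner keeps all of its data, and on a test point $z$ outputs the label of the training example closest to $z$ in Hamming distance.
   Context: Component distribution $q_{HC}$ (dimension $d$, $\rho\in[0,1]$): a subpopulation has $\mathcal I\subseteq[d]$ containing each index independently w.p. $\rho$ and uniform bits $b(i)$, $i\in\mathcal I$; an example from it is $z\in\{0,1\}^d$ with $z(i)=b(i)$ on $\mathcal I$ and independent uniform bits elsewhere. Task $\mathrm{Sing}(k,q_{HC})$: draw $k$ subpopulations i.i.d. from $q_{HC}$ and one example $x_j$ from subpopulation $j$, $j\in[k]$; the learner receives $(x_1,\dots,x_k)$ (example $x_j$ has label $j$); an index $j^*$ is uniform in $[k]$ and a fresh test point $z$ is drawn from subpopulation $j^*$; the learner must output $j^*$. *)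

theory Defs
  imports "HOL-Probability.Probability"
begin

text \<open>Points of the hypercube {0,1}^d are modelled as functions nat => bool
  that are False outside {..<d}. Coordinates and labels are 0-indexed.\<close>

type_synonym point = "nat \<Rightarrow> bool"

text \<open>A subpopulation is a pair (I, b): I is the indicator of the index set
  (each index in {..<d} included independently with probability rho), and b
  gives uniform bits on the indices in I.\<close>

definition subpop_pmf :: "nat \<Rightarrow> real \<Rightarrow> (point \<times> point) pmf" where
  "subpop_pmf d \<rho> =
     bind_pmf (Pi_pmf {..<d} False (\<lambda>_. bernoulli_pmf \<rho>)) (\<lambda>I.
     bind_pmf (Pi_pmf {i. i < d \<and> I i} False (\<lambda>_. bernoulli_pmf (1/2))) (\<lambda>b.
     return_pmf (I, b)))"

definition example_pmf :: "nat \<Rightarrow> point \<times> point \<Rightarrow> point pmf" where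
  "example_pmf d Ib =
     bind_pmf (Pi_pmf {..<d} False (\<lambda>_. bernoulli_pmf (1/2))) (\<lambda>u.
     return_pmf (\<lambda>i. if fst Ib i then snd Ib i else u i))"

text \<open>The task Sing(k, q_HC): joint distribution of the training examples
  X (example X j has label j, j < k), the hidden index j*, and the test point z.\<close>

definition sing_pmf :: "nat \<Rightarrow> nat \<Rightarrow> real \<Rightarrow> ((nat \<Rightarrow> point) \<times> nat \<times> point) pmf" where
  "sing_pmf k d \<rho> =
     bind_pmf (Pi_pmf {..<k} (\<lambda>_. False, \<lambda>_. False) (\<lambda>_. subpop_pmf d \<rho>)) (\<lambda>S.
     bind_pmf (Pi_pmf {..<k} (\<lambda>_. False) (\<lambda>j. example_pmf d (S j))) (\<lambda>X.
     bind_pmf (pmf_of_set {..<k}) (\<lambda>j.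
     bind_pmf (example_pmf d (S j)) (\<lambda>z.
     return_pmf (X, j, z)))))"

definition success_prob ::
  "nat \<Rightarrow> nat \<Rightarrow> real \<Rightarrow> ((nat \<Rightarrow> point) \<Rightarrow> point \<Rightarrow> nat pmf) \<Rightarrow> real" where
  "success_prob k d \<rho> L =
     measure_pmf.expectation (sing_pmf k d \<rho>) (\<lambda>(X, j, z). pmf (L X z) j)"

definition hamming :: "nat \<Rightarrow> point \<Rightarrow> point \<Rightarrow> nat" where
  "hamming d x y = card {i. i < d \<and> x i \<noteq> y i}"

definition nearest_neighbor_rule :: "nat \<Rightarrow> nat \<Rightarrow> ((nat \<Rightarrow> point) \<Rightarrow> point \<Rightarrow> nat) \<Rightarrow> bool" where
  "nearest_neighbor_rule k d g \<longleftrightarrow>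
     (\<forall>X z. g X z < k \<and> (\<forall>j<k. hamming d (X (g X z)) z \<le> hamming d (X j) z))"

end

theory Submission
  imports Defs
begin

lemma integral_bind_pmf_bounded:
  fixes f :: "'b \<Rightarrow> real"
  assumes nn: "\<And>x. 0 \<le> f x" and bd: "\<And>x. f x \<le> B"
  shows "measure_pmf.expectation (bind_pmf M N) f = measure_pmf.expectation M (\<lambda>x. measure_pmf.expectation (N x) f)"
proof -
  have int: "integrable (measure_pmf P) f" for P
    by (rule measure_pmf.integrable_const_bound[where B=B]) (use nn bd in auto)
  have int2: "integrable (measure_pmf M) (\<lambda>x. measure_pmf.expectation (N x) f)"
    apply (rule measure_pmf.integrable_const_bound[where B=B])
    using nn bd by (auto intro!: abs_leI Bochner_Integration.integral_nonneg measure_pmf.integral_le_const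
          simp: int order_trans[OF _ bd]) 
  have "ennreal (measure_pmf.expectation (bind_pmf M N) f) = (\<integral>\<^sup>+x. f x \<partial>bind_pmf M N)"
    by (rule nn_integral_eq_integral[symmetric]) (use int nn in auto)
  also have "\<dots> = (\<integral>\<^sup>+x. \<integral>\<^sup>+y. f y \<partial>N x \<partial>M)" by simp
  also have "\<dots> = (\<integral>\<^sup>+x. ennreal (measure_pmf.expectation (N x) f) \<partial>M)"
    by (intro nn_integral_cong nn_integral_eq_integral) (use int nn in auto)
  also have "\<dots> = ennreal (measure_pmf.expectation M (\<lambda>x. measure_pmf.expectation (N x) f))"
    by (rule nn_integral_eq_integral) (use int2 nn in \<open>auto intro!: Bochner_Integration.integral_nonneg\<close>)
  finally show ?thesis
    by (subst (asm) ennreal_inj) (auto intro!: Bochner_Integration.integral_nonneg nn)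
qed

lemma pmf_bind_Pair:
  "pmf (bind_pmf P (\<lambda>a. map_pmf (Pair a) (R a))) (a0, r0) = pmf P a0 * pmf (R a0) r0"
proof -
  have e: "pmf (map_pmf (Pair a) (R a)) (a0, r0) = indicator {a0} a * pmf (R a0) r0" for a
  proof (cases "a = a0")
    case True
    then show ?thesis by (simp add: pmf_map_inj' inj_on_def)
  next
    case False
    then show ?thesis by (auto simp: pmf_eq_0_set_pmf)
  qed
  have "pmf (bind_pmf P (\<lambda>a. map_pmf (Pair a) (R a))) (a0, r0)
        = measure_pmf.expectation P (\<lambda>a. indicator {a0} a * pmf (R a0) r0)"
    unfolding pmf_bind e ..
  also have "\<dots> = pmf P a0 * pmf (R a0) r0"
    by (subst integral_measure_pmf_real[where A="{a0}"]) (auto simp: indicator_def)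
  finally show ?thesis .
qed

lemma sing_alt: "sing_pmf k d \<rho> =
  bind_pmf (Pi_pmf {..<k} (\<lambda>_. False, \<lambda>_. False) (\<lambda>_. subpop_pmf d \<rho>)) (\<lambda>S.
  bind_pmf (Pi_pmf {..<k} (\<lambda>_. False) (\<lambda>j. example_pmf d (S j))) (\<lambda>X.
  map_pmf (Pair X) (bind_pmf (pmf_of_set {..<k}) (\<lambda>j. map_pmf (Pair j) (example_pmf d (S j))))))"
  unfolding sing_pmf_def map_pmf_def by (simp add: bind_assoc_pmf bind_return_pmf)

definition mm :: "nat \<Rightarrow> real \<Rightarrow> point \<Rightarrow> real" where
  "mm d \<rho> x = measure_pmf.expectation (subpop_pmf d \<rho>) (\<lambda>s. pmf (example_pmf d s) x)"

definition pp :: "nat \<Rightarrow> real \<Rightarrow> point \<Rightarrow> point \<Rightarrow> real" where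
  "pp d \<rho> x z = measure_pmf.expectation (subpop_pmf d \<rho>) (\<lambda>s. pmf (example_pmf d s) x * pmf (example_pmf d s) z)"

lemma int_pmf_bd: "integrable (measure_pmf M) (\<lambda>s. pmf (P s) x * pmf (Q s) y)"
  by (rule measure_pmf.integrable_const_bound[where B=1])
     (auto simp: abs_mult intro!: mult_le_one pmf_le_1)

lemma int_pmf_bd1: "integrable (measure_pmf M) (\<lambda>s. pmf (P s) x)"
  by (rule measure_pmf.integrable_const_bound[where B=1]) (auto intro!: pmf_le_1)

lemma pmf_sing:
  assumes k: "k \<ge> 1"
  shows "pmf (sing_pmf k d \<rho>) (X, j, z) =
    (if j < k \<and> (\<forall>l. l \<notin> {..<k} \<longrightarrow> X l = (\<lambda>_. False))
     then (\<Prod>l\<in>{..<k}-{j}. mm d \<rho> (X l)) * pp d \<rho> (X j) z / k else 0)"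
proof -
  define SS where "SS = Pi_pmf {..<k} (\<lambda>_. False, \<lambda>_. False) (\<lambda>_. subpop_pmf d \<rho>)"
  define valid where "valid = (\<forall>l. l \<notin> {..<k} \<longrightarrow> X l = (\<lambda>_. False))"
  have ne: "{..<k} \<noteq> {}" using k by (simp add: lessThan_empty_iff)
  have step: "pmf (bind_pmf (Pi_pmf {..<k} (\<lambda>_. False) (\<lambda>j. example_pmf d (S j))) (\<lambda>X.
       map_pmf (Pair X) (bind_pmf (pmf_of_set {..<k}) (\<lambda>j. map_pmf (Pair j) (example_pmf d (S j)))))) (X, j, z)
     = (if valid then \<Prod>l\<in>{..<k}. pmf (example_pmf d (S l)) (X l) else 0) *
       (indicator {..<k} j / real k * pmf (example_pmf d (S j)) z)" for S
    by (subst pmf_bind_Pair, subst pmf_bind_Pair) (simp add: pmf_Pi valid_def ne)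
  have "pmf (sing_pmf k d \<rho>) (X, j, z) = measure_pmf.expectation SS
     (\<lambda>S. (if valid then \<Prod>l\<in>{..<k}. pmf (example_pmf d (S l)) (X l) else 0) *
       (indicator {..<k} j / real k * pmf (example_pmf d (S j)) z))"
    unfolding sing_alt SS_def[symmetric] pmf_bind[of SS] step ..
  also have "\<dots> = (if j < k \<and> valid
     then (\<Prod>l\<in>{..<k}-{j}. mm d \<rho> (X l)) * pp d \<rho> (X j) z / k else 0)"
  proof (cases "j < k \<and> valid")
    case False
    then show ?thesis by (auto simp: indicator_def)
  next
    case True
    define F where "F = (\<lambda>l s. pmf (example_pmf d s) (X l) * (if l = j then pmf (example_pmf d s) z else 1))"
    have "measure_pmf.expectation SS
     (\<lambda>S. (if valid then \<Prod>l\<in>{..<k}. pmf (example_pmf d (S l)) (X l) else 0) *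
       (indicator {..<k} j / real k * pmf (example_pmf d (S j)) z))
      = measure_pmf.expectation SS (\<lambda>S. (\<Prod>l\<in>{..<k}. F l (S l)) / real k)"
    proof (intro Bochner_Integration.integral_cong refl)
      fix S
      have "(\<Prod>l\<in>{..<k}. F l (S l)) = (\<Prod>l\<in>{..<k}. pmf (example_pmf d (S l)) (X l)) *
             (\<Prod>l\<in>{..<k}. (if l = j then pmf (example_pmf d (S l)) z else 1))"
        unfolding F_def prod.distrib ..
      also have "(\<Prod>l\<in>{..<k}. (if l = j then pmf (example_pmf d (S l)) z else 1)) = pmf (example_pmf d (S j)) z"
        using True by (subst prod.delta) auto
      finally show "(if valid then \<Prod>l\<in>{..<k}. pmf (example_pmf d (S l)) (X l) else 0) *
       (indicator {..<k} j / real k * pmf (example_pmf d (S j)) z) = (\<Prod>l\<in>{..<k}. F l (S l)) / real k"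
        using True by (simp add: indicator_def)
    qed
    also have "\<dots> = measure_pmf.expectation SS (\<lambda>S. (\<Prod>l\<in>{..<k}. F l (S l))) / real k"
      by simp
    also have "measure_pmf.expectation SS (\<lambda>S. (\<Prod>l\<in>{..<k}. F l (S l)))
        = (\<Prod>l\<in>{..<k}. measure_pmf.expectation (subpop_pmf d \<rho>) (F l))"
      unfolding SS_def
      by (rule expectation_prod_Pi_pmf)
         (auto simp: F_def abs_mult intro!: measure_pmf.integrable_const_bound[where B=1] mult_le_one pmf_le_1 AE_pmfI)
    also have "\<dots> = (\<Prod>l\<in>{..<k}. if l = j then pp d \<rho> (X j) z else mm d \<rho> (X l))"
      by (intro prod.cong refl) (auto simp: F_def pp_def mm_def)
    also have "\<dots> = pp d \<rho> (X j) z * (\<Prod>l\<in>{..<k}-{j}. mm d \<rho> (X l))"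
      using True by (subst prod.remove[of _ j]) (auto intro!: prod.cong)
    finally show ?thesis using True by simp
  qed
  finally show ?thesis unfolding valid_def .
qed


definition V :: "nat \<Rightarrow> point set" where "V d = {x. \<forall>i. d \<le> i \<longrightarrow> \<not> x i}"

definition ee :: "bool \<Rightarrow> bool \<Rightarrow> bool \<Rightarrow> real" where
  "ee a c y = (if a then (if y = c then 1 else 0) else 1/2)"

lemma subpop_support:
  assumes "s \<in> set_pmf (subpop_pmf d \<rho>)" "d \<le> i"
  shows "\<not> fst s i" "\<not> snd s i"
proof -
  from assms(1) obtain I b where s: "s = (I, b)"
    and I: "I \<in> set_pmf (Pi_pmf {..<d} False (\<lambda>_. bernoulli_pmf \<rho>))"
    and b: "b \<in> set_pmf (Pi_pmf {i. i < d \<and> I i} False (\<lambda>_. bernoulli_pmf (1/2)))"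
    unfolding subpop_pmf_def by auto
  have "I i = False" using set_Pi_pmf_subset[of "{..<d}" False] I assms(2) by force
  moreover have "b i = False" using set_Pi_pmf_subset[of "{i. i < d \<and> I i}" False] b assms(2) by force
  ultimately show "\<not> fst s i" "\<not> snd s i" using s by auto
qed

lemma example_alt:
  assumes "\<And>i. d \<le> i \<Longrightarrow> \<not> I i"
  shows "example_pmf d (I, b) = Pi_pmf {..<d} False (\<lambda>i. if I i then return_pmf (b i) else bernoulli_pmf (1/2))"
proof -
  have "Pi_pmf {..<d} False (\<lambda>i. if I i then return_pmf (b i) else bernoulli_pmf (1/2))
      = Pi_pmf {..<d} False (\<lambda>i. bind_pmf (bernoulli_pmf (1/2)) (\<lambda>c. return_pmf (if I i then b i else c)))"
    by (intro Pi_pmf_cong) (auto simp: bind_return_pmf')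
  also have "\<dots> = bind_pmf (Pi_pmf {..<d} False (\<lambda>_. bernoulli_pmf (1/2)))
       (\<lambda>f. Pi_pmf {..<d} False (\<lambda>i. return_pmf (if I i then b i else f i)))"
    by (rule Pi_pmf_bind) simp
  also have "\<dots> = bind_pmf (Pi_pmf {..<d} False (\<lambda>_. bernoulli_pmf (1/2)))
       (\<lambda>u. return_pmf (\<lambda>i. if I i then b i else u i))"
  proof (intro bind_pmf_cong refl)
    fix u assume u: "u \<in> set_pmf (Pi_pmf {..<d} False (\<lambda>_. bernoulli_pmf (1/2)))"
    have "u i = False" if "d \<le> i" for i
      using set_Pi_pmf_subset[of "{..<d}" False] u that by force
    then show "Pi_pmf {..<d} False (\<lambda>i. return_pmf (if I i then b i else u i)) =
        return_pmf (\<lambda>i. if I i then b i else u i)"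
      using assms by (auto intro!: arg_cong[where f=return_pmf] simp: fun_eq_iff not_less)
  qed
  finally show ?thesis unfolding example_pmf_def by simp
qed

lemma pmf_example:
  assumes "\<And>i. d \<le> i \<Longrightarrow> \<not> I i"
  shows "pmf (example_pmf d (I, b)) x = (if x \<in> V d then \<Prod>i<d. ee (I i) (b i) (x i) else 0)"
proof -
  have "pmf (example_pmf d (I, b)) x = (if (\<forall>i. i \<notin> {..<d} \<longrightarrow> x i = False) then
     \<Prod>i\<in>{..<d}. pmf (if I i then return_pmf (b i) else bernoulli_pmf (1/2)) (x i) else 0)"
    apply (subst example_alt)
     apply (simp add: assms)
    apply (rule pmf_Pi)
    apply simp
    done
  also have "\<dots> = (if x \<in> V d then \<Prod>i<d. ee (I i) (b i) (x i) else 0)"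
    by (auto simp: V_def ee_def not_less intro!: prod.cong)
  finally show ?thesis .
qed


lemma int_bd01: 
  fixes f :: "'a \<Rightarrow> real"
  assumes "\<And>x. 0 \<le> f x" "\<And>x. f x \<le> 1"
  shows "integrable (measure_pmf M) f"
  by (rule measure_pmf.integrable_const_bound[where B=1]) (use assms in \<open>auto intro!: AE_pmfI abs_leI order_trans[OF _ assms(2)]\<close>)

lemma coord_expect:
  fixes h :: "nat \<Rightarrow> bool \<Rightarrow> bool \<Rightarrow> real"
  assumes r: "0 \<le> \<rho>" "\<rho> \<le> 1" and h0: "\<And>i a c. 0 \<le> h i a c" and h1: "\<And>i a c. h i a c \<le> 1"
  shows "measure_pmf.expectation (subpop_pmf d \<rho>) (\<lambda>s. \<Prod>i<d. h i (fst s i) (snd s i))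
     = (\<Prod>i<d. \<rho> * ((h i True True + h i True False) / 2) + (1 - \<rho>) * h i False False)"
proof -
  define k where "k = (\<lambda>i a. if a then (h i True True + h i True False) / 2 else h i False False)"
  have k0: "0 \<le> k i a" for i a using h0 by (auto simp: k_def)
  have k1: "k i a \<le> 1" for i a using h1[of i True True] h1[of i True False] h1[of i False False] by (auto simp: k_def)
  have P0: "0 \<le> (\<Prod>i<d. h i (I i) (b i))" for I b by (intro prod_nonneg) (auto intro: h0)
  have P1: "(\<Prod>i<d. h i (I i) (b i)) \<le> 1" for I b by (intro prod_le_1) (auto intro: h0 h1)
  have inner: "measure_pmf.expectation (Pi_pmf {i. i < d \<and> I i} False (\<lambda>_. bernoulli_pmf (1/2)))
        (\<lambda>b. \<Prod>i<d. h i (I i) (b i)) = (\<Prod>i<d. k i (I i))" for I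
  proof -
    have "Pi_pmf {i. i < d \<and> I i} False (\<lambda>_. bernoulli_pmf (1/2))
        = Pi_pmf {..<d} False (\<lambda>i. if I i then bernoulli_pmf (1/2) else return_pmf False)"
      by (subst Pi_pmf_if_set) (auto intro!: arg_cong[where f="\<lambda>A. Pi_pmf A _ _"])
    also have "measure_pmf.expectation \<dots> (\<lambda>b. \<Prod>i<d. h i (I i) (b i))
       = (\<Prod>i<d. measure_pmf.expectation (if I i then bernoulli_pmf (1/2) else return_pmf False) (h i (I i)))"
      by (rule expectation_prod_Pi_pmf) (auto intro: int_bd01 h0 h1)
    also have "\<dots> = (\<Prod>i<d. k i (I i))"
      by (intro prod.cong refl) (auto simp: k_def)
    finally show ?thesis .
  qed
  have "measure_pmf.expectation (subpop_pmf d \<rho>) (\<lambda>s. \<Prod>i<d. h i (fst s i) (snd s i))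
     = measure_pmf.expectation (Pi_pmf {..<d} False (\<lambda>_. bernoulli_pmf \<rho>)) (\<lambda>I.
         measure_pmf.expectation (Pi_pmf {i. i < d \<and> I i} False (\<lambda>_. bernoulli_pmf (1/2))) (\<lambda>b.
          \<Prod>i<d. h i (I i) (b i)))"
    unfolding subpop_pmf_def
    apply (subst integral_bind_pmf_bounded[where B=1])
      apply (simp_all add: P0 P1)
    apply (intro Bochner_Integration.integral_cong refl)
    apply (subst integral_bind_pmf_bounded[where B=1])
      apply (simp_all add: P0 P1)
    done
  also have "\<dots> = measure_pmf.expectation (Pi_pmf {..<d} False (\<lambda>_. bernoulli_pmf \<rho>)) (\<lambda>I. \<Prod>i<d. k i (I i))"
    by (simp add: inner)
  also have "\<dots> = (\<Prod>i<d. measure_pmf.expectation (bernoulli_pmf \<rho>) (k i))"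
    by (rule expectation_prod_Pi_pmf) (auto intro: int_bd01 k0 k1)
  also have "\<dots> = (\<Prod>i<d. \<rho> * ((h i True True + h i True False) / 2) + (1 - \<rho>) * h i False False)"
    using r by (intro prod.cong refl) (auto simp: k_def algebra_simps)
  finally show ?thesis .
qed


lemma pmf_example_s:
  assumes "s \<in> set_pmf (subpop_pmf d \<rho>)"
  shows "pmf (example_pmf d s) x = (if x \<in> V d then \<Prod>i<d. ee (fst s i) (snd s i) (x i) else 0)"
proof (cases s)
  case (Pair I b)
  have "\<And>i. d \<le> i \<Longrightarrow> \<not> I i" using subpop_support(1)[OF assms] Pair by auto
  then show ?thesis using Pair by (simp add: pmf_example)
qed

lemma ee01: "0 \<le> ee a c y" "ee a c y \<le> 1" by (auto simp: ee_def)

lemma mm_formula: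
  assumes r: "0 \<le> \<rho>" "\<rho> \<le> 1"
  shows "mm d \<rho> x = (if x \<in> V d then (1/2)^d else 0)"
proof -
  have "mm d \<rho> x = measure_pmf.expectation (subpop_pmf d \<rho>)
      (\<lambda>s. if x \<in> V d then \<Prod>i<d. ee (fst s i) (snd s i) (x i) else 0)"
    unfolding mm_def by (intro integral_cong_AE) (auto intro!: AE_pmfI simp: pmf_example_s)
  also have "\<dots> = (if x \<in> V d then (1/2)^d else 0)"
  proof (cases "x \<in> V d")
    case True
    have "measure_pmf.expectation (subpop_pmf d \<rho>) (\<lambda>s. \<Prod>i<d. ee (fst s i) (snd s i) (x i))
       = (\<Prod>i<d. \<rho> * ((ee True True (x i) + ee True False (x i)) / 2) + (1 - \<rho>) * ee False False (x i))"
      by (rule coord_expect) (use r in \<open>auto intro: ee01\<close>)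
    also have "\<dots> = (\<Prod>i<d. 1/2)"
      by (intro prod.cong refl) (auto simp: ee_def field_simps)
    finally show ?thesis using True by simp
  qed simp
  finally show ?thesis .
qed

definition qq :: "real \<Rightarrow> bool \<Rightarrow> bool \<Rightarrow> real" where
  "qq \<rho> y w = \<rho> * (if y = w then 1/2 else 0) + (1 - \<rho>) / 4"

lemma pp_formula:
  assumes r: "0 \<le> \<rho>" "\<rho> \<le> 1"
  shows "pp d \<rho> x z = (if x \<in> V d \<and> z \<in> V d then \<Prod>i<d. qq \<rho> (x i) (z i) else 0)"
proof -
  have "pp d \<rho> x z = measure_pmf.expectation (subpop_pmf d \<rho>)
      (\<lambda>s. if x \<in> V d \<and> z \<in> V d then \<Prod>i<d. ee (fst s i) (snd s i) (x i) * ee (fst s i) (snd s i) (z i) else 0)"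
    unfolding pp_def by (intro integral_cong_AE) (auto intro!: AE_pmfI simp: pmf_example_s prod.distrib)
  also have "\<dots> = (if x \<in> V d \<and> z \<in> V d then \<Prod>i<d. qq \<rho> (x i) (z i) else 0)"
  proof (cases "x \<in> V d \<and> z \<in> V d")
    case True
    have "measure_pmf.expectation (subpop_pmf d \<rho>) (\<lambda>s. \<Prod>i<d. ee (fst s i) (snd s i) (x i) * ee (fst s i) (snd s i) (z i))
       = (\<Prod>i<d. \<rho> * ((ee True True (x i) * ee True True (z i) + ee True False (x i) * ee True False (z i)) / 2)
            + (1 - \<rho>) * (ee False False (x i) * ee False False (z i)))"
      by (rule coord_expect[where h="\<lambda>i a c. ee a c (x i) * ee a c (z i)"])
         (use r in \<open>auto intro: ee01 mult_le_one mult_nonneg_nonneg\<close>)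
    also have "\<dots> = (\<Prod>i<d. qq \<rho> (x i) (z i))"
      by (intro prod.cong refl) (auto simp: ee_def qq_def algebra_simps)
    finally show ?thesis using True by simp
  next
    case False
    then have F: "(x \<in> V d \<and> z \<in> V d) = False" by simp
    show ?thesis unfolding F if_False by simp
  qed
  finally show ?thesis .
qed


lemma hamming_le: "hamming d x z \<le> d"
proof -
  have "hamming d x z \<le> card {..<d}" unfolding hamming_def by (intro card_mono) auto
  then show ?thesis by simp
qed

lemma prod_qq:
  "(\<Prod>i<d. qq \<rho> (x i) (z i)) = ((1 - \<rho>)/4) ^ hamming d x z * (\<rho>/2 + (1 - \<rho>)/4) ^ (d - hamming d x z)"
proof -
  let ?D = "{i. i < d \<and> x i \<noteq> z i}"
  have "(\<Prod>i<d. qq \<rho> (x i) (z i)) = (\<Prod>i<d. if x i \<noteq> z i then (1 - \<rho>)/4 else \<rho>/2 + (1 - \<rho>)/4)"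
    by (intro prod.cong refl) (auto simp: qq_def)
  also have "\<dots> = (\<Prod>i\<in>{..<d} \<inter> {i. x i \<noteq> z i}. (1 - \<rho>)/4) * (\<Prod>i\<in>{..<d} \<inter> - {i. x i \<noteq> z i}. \<rho>/2 + (1 - \<rho>)/4)"
    by (rule prod.If_cases) simp
  also have "\<dots> = ((1 - \<rho>)/4) ^ card ({..<d} \<inter> {i. x i \<noteq> z i}) * (\<rho>/2 + (1 - \<rho>)/4) ^ card ({..<d} \<inter> - {i. x i \<noteq> z i})"
    by simp
  also have c1: "card ({..<d} \<inter> {i. x i \<noteq> z i}) = hamming d x z"
    unfolding hamming_def by (intro arg_cong[where f=card]) auto
  also have "card ({..<d} \<inter> - {i. x i \<noteq> z i}) = d - hamming d x z"
  proof -
    have "{..<d} \<inter> - {i. x i \<noteq> z i} = {..<d} - ?D" by auto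
    then have "card ({..<d} \<inter> - {i. x i \<noteq> z i}) = card {..<d} - card ?D"
      by (simp only:) (rule card_Diff_subset, auto)
    then show ?thesis by (simp add: hamming_def)
  qed
  finally show ?thesis by simp
qed

lemma pp_mono:
  assumes r: "0 \<le> \<rho>" "\<rho> \<le> 1" and V: "x \<in> V d" "y \<in> V d" "z \<in> V d"
    and h: "hamming d x z \<le> hamming d y z"
  shows "pp d \<rho> y z \<le> pp d \<rho> x z"
proof -
  define B where "B = (1 - \<rho>)/4"
  define A where "A = \<rho>/2 + (1 - \<rho>)/4"
  define a where "a = hamming d x z"
  define b where "b = hamming d y z"
  have B0: "0 \<le> B" and BA: "B \<le> A" using r by (auto simp: A_def B_def)
  have ab: "a \<le> b" "b \<le> d" using h hamming_le unfolding a_def b_def by auto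
  have "B ^ b * A ^ (d - b) = B ^ a * B ^ (b - a) * A ^ (d - b)"
    using ab by (simp add: power_add[symmetric])
  also have "\<dots> \<le> B ^ a * A ^ (b - a) * A ^ (d - b)"
    using B0 BA by (intro mult_right_mono mult_left_mono power_mono) auto
  also have "\<dots> = B ^ a * A ^ (d - a)"
    using ab by (simp add: mult.assoc power_add[symmetric])
  finally have "B ^ b * A ^ (d - b) \<le> B ^ a * A ^ (d - a)" .
  then show ?thesis
    using V by (simp add: pp_formula[OF r] prod_qq A_def B_def a_def b_def)
qed

lemma pp_nonneg: "0 \<le> \<rho> \<Longrightarrow> \<rho> \<le> 1 \<Longrightarrow> 0 \<le> pp d \<rho> x z"
  by (auto simp: pp_formula qq_def intro!: prod_nonneg)

lemma mm_nonneg: "0 \<le> \<rho> \<Longrightarrow> \<rho> \<le> 1 \<Longrightarrow> 0 \<le> mm d \<rho> x"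
  by (auto simp: mm_formula)

lemma core:
  assumes r: "0 \<le> \<rho>" "\<rho> \<le> 1" and h: "hamming d x z \<le> hamming d y z"
  shows "mm d \<rho> x * pp d \<rho> y z \<le> mm d \<rho> y * pp d \<rho> x z"
proof (cases "x \<in> V d \<and> y \<in> V d \<and> z \<in> V d")
  case True
  then show ?thesis using pp_mono[OF r _ _ _ h] by (simp add: mm_formula[OF r])
next
  case False
  then have "mm d \<rho> x * pp d \<rho> y z = 0" by (auto simp: mm_formula[OF r] pp_formula[OF r])
  moreover have "0 \<le> mm d \<rho> y * pp d \<rho> x z"
    using mm_nonneg[OF r] pp_nonneg[OF r] by (intro mult_nonneg_nonneg)
  ultimately show ?thesis by linarith
qed


lemma finite_V: "finite (V d)"
proof -
  have "V d = PiE_dflt {..<d} False (\<lambda>_. UNIV)" by (auto simp: V_def PiE_dflt_def not_less)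
  then show ?thesis by auto
qed

lemma P_le_g:
  assumes k: "k \<ge> 1" and r: "0 \<le> \<rho>" "\<rho> \<le> 1" and nn: "nearest_neighbor_rule k d g"
  shows "pmf (sing_pmf k d \<rho>) (X, j, z) \<le> pmf (sing_pmf k d \<rho>) (X, g X z, z)"
proof (cases "j < k \<and> (\<forall>l. l \<notin> {..<k} \<longrightarrow> X l = (\<lambda>_. False))")
  case False
  then have cond: "(j < k \<and> (\<forall>l. l \<notin> {..<k} \<longrightarrow> X l = (\<lambda>_. False))) = False" by simp
  have "pmf (sing_pmf k d \<rho>) (X, j, z) = 0" by (subst pmf_sing[OF k], simp only: cond if_False)
  then show ?thesis by simp
next
  case True
  define G where "G = g X z"
  have G: "G < k" "hamming d (X G) z \<le> hamming d (X j) z"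
    using nn True unfolding nearest_neighbor_rule_def G_def by auto
  show ?thesis
  proof (cases "j = G")
    case True then show ?thesis by (simp add: G_def)
  next
    case ne: False
    define K where "K = {..<k}"
    define c where "c = (\<Prod>l\<in>K-{j}-{G}. mm d \<rho> (X l))"
    have c0: "0 \<le> c" unfolding c_def by (intro prod_nonneg) (auto intro: mm_nonneg r)
    have e1: "(\<Prod>l\<in>K-{j}. mm d \<rho> (X l)) = mm d \<rho> (X G) * c"
      unfolding c_def using G ne by (subst prod.remove[of _ G]) (auto simp: K_def)
    have e2: "(\<Prod>l\<in>K-{G}. mm d \<rho> (X l)) = mm d \<rho> (X j) * c"
    proof -
      have "K-{j}-{G} = K-{G}-{j}" by auto
      then show ?thesis
        unfolding c_def using True ne by (subst prod.remove[of _ j]) (auto simp: K_def)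
    qed
    have "c * (mm d \<rho> (X G) * pp d \<rho> (X j) z) \<le> c * (mm d \<rho> (X j) * pp d \<rho> (X G) z)"
      using core[OF r G(2)] c0 by (rule mult_left_mono)
    then have "mm d \<rho> (X G) * c * pp d \<rho> (X j) z / real k \<le> mm d \<rho> (X j) * c * pp d \<rho> (X G) z / real k"
      by (intro divide_right_mono) (auto simp: algebra_simps)
    then show ?thesis
      using True G by (simp add: pmf_sing[OF k] K_def[symmetric] e1 e2 G_def[symmetric])
  qed
qed

theorem proposition4p1:
  fixes k d :: nat and \<rho> :: real
    and g :: "(nat \<Rightarrow> point) \<Rightarrow> point \<Rightarrow> nat"
    and L :: "(nat \<Rightarrow> point) \<Rightarrow> point \<Rightarrow> nat pmf"
  assumes "k \<ge> 1" and "0 \<le> \<rho>" and "\<rho> \<le> 1"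
    and "nearest_neighbor_rule k d g"
  shows "success_prob k d \<rho> L \<le> success_prob k d \<rho> (\<lambda>X z. return_pmf (g X z))"
proof -
  note k = assms(1) and r = assms(2,3) and nn = assms(4)
  define P where "P = (\<lambda>X j z. pmf (sing_pmf k d \<rho>) (X, j, z))"
  define XS where "XS = PiE_dflt {..<k} (\<lambda>_. False) (\<lambda>_. V d)"
  have finXS: "finite XS" unfolding XS_def using finite_V by auto
  have supp: "X \<in> XS \<and> j < k \<and> z \<in> V d" if "P X j z \<noteq> 0" for X j z
  proof -
    have c: "j < k \<and> (\<forall>l. l \<notin> {..<k} \<longrightarrow> X l = (\<lambda>_. False))"
      and nz: "(\<Prod>l\<in>{..<k}-{j}. mm d \<rho> (X l)) \<noteq> 0" "pp d \<rho> (X j) z \<noteq> 0"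
      using that by (auto simp: P_def pmf_sing[OF k] split: if_splits)
    have "X l \<in> V d" if "l \<in> {..<k}-{j}" for l
      using nz(1) that by (auto simp: mm_formula[OF r] split: if_splits)
    moreover have "X j \<in> V d" "z \<in> V d" using nz(2) by (auto simp: pp_formula[OF r] split: if_splits)
    ultimately show ?thesis using c unfolding XS_def PiE_dflt_def by auto
  qed
  have Esum: "success_prob k d \<rho> L' = (\<Sum>X\<in>XS. \<Sum>z\<in>V d. \<Sum>j<k. P X j z * pmf (L' X z) j)" for L'
  proof -
    have "success_prob k d \<rho> L' = (\<Sum>a\<in>XS \<times> ({..<k} \<times> V d). (case a of (X, j, z) \<Rightarrow> pmf (L' X z) j) * pmf (sing_pmf k d \<rho>) a)"
      unfolding success_prob_def
      by (rule integral_measure_pmf_real) (use finXS finite_V supp in \<open>auto simp: P_def set_pmf_iff\<close>)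
    also have "\<dots> = (\<Sum>X\<in>XS. \<Sum>j<k. \<Sum>z\<in>V d. P X j z * pmf (L' X z) j)"
      apply (simp add: sum.cartesian_product P_def)
      apply (rule sum.cong[OF refl])
      apply (auto simp: mult.commute)
      done
    also have "\<dots> = (\<Sum>X\<in>XS. \<Sum>z\<in>V d. \<Sum>j<k. P X j z * pmf (L' X z) j)"
      by (intro sum.cong refl) (rule sum.swap)
    finally show ?thesis .
  qed
  have inner: "(\<Sum>j<k. P X j z * pmf (L X z) j) \<le> (\<Sum>j<k. P X j z * pmf (return_pmf (g X z)) j)" for X z
  proof -
    define G where "G = g X z"
    have G: "G < k" using nn unfolding nearest_neighbor_rule_def G_def by auto
    have "(\<Sum>j<k. P X j z * pmf (L X z) j) \<le> (\<Sum>j<k. P X G z * pmf (L X z) j)"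
      by (intro sum_mono mult_right_mono) (auto simp: P_def G_def P_le_g[OF k r nn])
    also have "\<dots> = P X G z * (\<Sum>j<k. pmf (L X z) j)" by (simp add: sum_distrib_left)
    also have "\<dots> \<le> P X G z * 1"
    proof (intro mult_left_mono)
      have "(\<Sum>j<k. pmf (L X z) j) = measure_pmf.prob (L X z) {..<k}"
        by (simp add: measure_measure_pmf_finite)
      then show "(\<Sum>j<k. pmf (L X z) j) \<le> 1" by simp
    qed (simp add: P_def)
    also have "\<dots> = (\<Sum>j<k. P X j z * pmf (return_pmf G) j)"
      using G by (simp add: indicator_def)
    finally show ?thesis by (simp add: G_def)
  qed
  show ?thesis
    unfolding Esum by (intro sum_mono inner)
qed


end
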